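(* Let $Y=\mathbf{F}_e$ and let $A\equiv C_0+bf$ be a very ample divisor on $Y$. Let $P_1,\dots,P_r$ be $r$ distinct points of $Y$, no two on the same fibre, and let $F=\{f_1,\dots,f_r\}$ where $f_i=\rho^*(\rho(P_i))$ is the fibre through $P_i$. If $h^0(Y,A)\ge2r$, then for any fixed finite set $\Phi$ of fibres with $\Phi\cap F=\emptyset$ there exists at least one element $\gamma\in|A|$ which passes through $P_1,\dots,P_r$, is smooth at each $P_i$, and intersects every fibre of $\Phi$ transversely.
   Context: $\mathbf{F}_e=\mathbb{P}(\mathcal{O}_{\mathbb{P}^1}\oplus\mathcal{O}_{\mathbb{P}^1}(-e))$, $e\ge0$, with ruling $\rho:\mathbf{F}_e\to\mathbb{P}^1$; $C_0$ ($C_0^2=-e$) and $f$ (fibre class) are the standard generators of $\mathrm{Pic}(\mathbf{F}_e)$. *)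

theory Defs
  imports Complex_Main
begin

(* Concrete model of the Hirzebruch surface F_e over the complex numbers, via Cox
   (homogeneous) coordinates (t0,t1,x0,x1), (t0,t1) <> 0, (x0,x1) <> 0, modulo
   (t0,t1,x0,x1) ~ (l*t0, l*t1, m*l^e*x0, m*x1), l,m <> 0.
   Classes: t0,t1 ~ f ; x0 ~ C_0 + e f ; x1 ~ C_0 (the curve x1 = 0 is C_0, C_0^2 = -e).
   The ruling rho sends the class of (t0,t1,x0,x1) to [t0:t1] in P^1. *)

type_synonym pt = "complex \<times> complex \<times> complex \<times> complex"

definition valid_pt :: "pt \<Rightarrow> bool" where
  "valid_pt p = (case p of (t0,t1,x0,x1) \<Rightarrow> (t0,t1) \<noteq> (0,0) \<and> (x0,x1) \<noteq> (0,0))"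

definition same_fibre :: "pt \<Rightarrow> pt \<Rightarrow> bool" where
  "same_fibre p q = (case p of (t0,t1,_,_) \<Rightarrow> case q of (s0,s1,_,_) \<Rightarrow> t0 * s1 = t1 * s0)"

(* the point [tau0:tau1] of P^1 (tau <> 0) is rho(p) *)
definition on_fibre :: "complex \<times> complex \<Rightarrow> pt \<Rightarrow> bool" where
  "on_fibre tau p = (case tau of (a0,a1) \<Rightarrow> case p of (t0,t1,_,_) \<Rightarrow> a1 * t0 - a0 * t1 = 0)"

definition bform :: "(nat \<Rightarrow> complex) \<Rightarrow> nat \<Rightarrow> complex \<Rightarrow> complex \<Rightarrow> complex" where
  "bform c d t0 t1 = (\<Sum>i\<le>d. c i * t0 ^ i * t1 ^ (d - i))"

definition bform_d0 :: "(nat \<Rightarrow> complex) \<Rightarrow> nat \<Rightarrow> complex \<Rightarrow> complex \<Rightarrow> complex" where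
  "bform_d0 c d t0 t1 = (\<Sum>i\<le>d. c i * of_nat i * t0 ^ (i - 1) * t1 ^ (d - i))"

definition bform_d1 :: "(nat \<Rightarrow> complex) \<Rightarrow> nat \<Rightarrow> complex \<Rightarrow> complex \<Rightarrow> complex" where
  "bform_d1 c d t0 t1 = (\<Sum>i\<le>d. c i * of_nat (d - i) * t0 ^ i * t1 ^ (d - i - 1))"

(* A global section of O(C_0 + b f) (b >= e) is  s = x0 * G(t) + x1 * H(t)  with
   G a binary form of degree b - e and H a binary form of degree b. *)
type_synonym sect = "(nat \<Rightarrow> complex) \<times> (nat \<Rightarrow> complex)"

definition sec_eval :: "nat \<Rightarrow> nat \<Rightarrow> sect \<Rightarrow> pt \<Rightarrow> complex" where
  "sec_eval e b \<sigma> p = (case p of (t0,t1,x0,x1) \<Rightarrow>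
      x0 * bform (fst \<sigma>) (b - e) t0 t1 + x1 * bform (snd \<sigma>) b t0 t1)"

definition sec_grad :: "nat \<Rightarrow> nat \<Rightarrow> sect \<Rightarrow> pt \<Rightarrow> pt" where
  "sec_grad e b \<sigma> p = (case p of (t0,t1,x0,x1) \<Rightarrow>
      (x0 * bform_d0 (fst \<sigma>) (b - e) t0 t1 + x1 * bform_d0 (snd \<sigma>) b t0 t1,
       x0 * bform_d1 (fst \<sigma>) (b - e) t0 t1 + x1 * bform_d1 (snd \<sigma>) b t0 t1,
       bform (fst \<sigma>) (b - e) t0 t1,
       bform (snd \<sigma>) b t0 t1))"

(* sigma is a nonzero section, so its zero divisor gamma is an element of |C_0 + b f| *)
definition nonzero_section :: "nat \<Rightarrow> nat \<Rightarrow> sect \<Rightarrow> bool" where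
  "nonzero_section e b \<sigma> = ((\<exists>i\<le>b - e. fst \<sigma> i \<noteq> 0) \<or> (\<exists>i\<le>b. snd \<sigma> i \<noteq> 0))"

definition passes_through :: "nat \<Rightarrow> nat \<Rightarrow> sect \<Rightarrow> pt \<Rightarrow> bool" where
  "passes_through e b \<sigma> p = (sec_eval e b \<sigma> p = 0)"

(* Jacobian criterion: the curve {s = 0} is smooth at p (the quotient map from the
   Cox open set to F_e is a smooth principal torus bundle) *)
definition smooth_at :: "nat \<Rightarrow> nat \<Rightarrow> sect \<Rightarrow> pt \<Rightarrow> bool" where
  "smooth_at e b \<sigma> p = (sec_grad e b \<sigma> p \<noteq> (0,0,0,0))"

(* gamma = {s = 0} meets the fibre {tau1*t0 - tau0*t1 = 0} transversely: at every
   common point the differentials of the two equations are linearly independent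
   (the gradient of the fibre equation is (tau1, -tau0, 0, 0) <> 0). *)
definition transverse_to_fibre :: "nat \<Rightarrow> nat \<Rightarrow> sect \<Rightarrow> complex \<times> complex \<Rightarrow> bool" where
  "transverse_to_fibre e b \<sigma> tau = (\<forall>p. valid_pt p \<and> sec_eval e b \<sigma> p = 0 \<and> on_fibre tau p \<longrightarrow>
      \<not> (\<exists>c. sec_grad e b \<sigma> p = (c * snd tau, - c * fst tau, 0, 0)))"

(* Very ampleness of a C_0 + b f on F_e (Hartshorne V.2.18): a > 0 and b > a e *)
definition very_ample_Fe :: "nat \<Rightarrow> nat \<Rightarrow> nat \<Rightarrow> bool" where
  "very_ample_Fe e a b = (a > 0 \<and> b > a * e)"

(* h^0(F_e, C_0 + b f) for b >= e: number of monomials x0 t^(b-e) and x1 t^b *)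
definition h0_C0_bf :: "nat \<Rightarrow> nat \<Rightarrow> nat" where
  "h0_C0_bf e b = (b - e + 1) + (b + 1)"

end

theory Submission
  imports Defs
begin

definition is_form :: "nat \<Rightarrow> (complex \<Rightarrow> complex \<Rightarrow> complex) \<Rightarrow> bool" where
  "is_form d f \<longleftrightarrow> (\<exists>c. f = bform c d)"

lemma form_const: "is_form 0 (\<lambda>_ _. k)"
  unfolding is_form_def by (rule exI[of _ "\<lambda>_. k"]) (auto simp: bform_def fun_eq_iff)

lemma form_zero: "is_form d (\<lambda>_ _. 0)"
  unfolding is_form_def by (rule exI[of _ "\<lambda>_. 0"]) (auto simp: bform_def fun_eq_iff)

lemma form_add: "is_form d f \<Longrightarrow> is_form d g \<Longrightarrow> is_form d (\<lambda>s0 s1. f s0 s1 + g s0 s1)"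
  unfolding is_form_def
  apply clarify
  subgoal for c c' by (rule exI[of _ "\<lambda>i. c i + c' i"]) (auto simp: bform_def fun_eq_iff sum.distrib algebra_simps)
  done

lemma form_smult: "is_form d f \<Longrightarrow> is_form d (\<lambda>s0 s1. k * f s0 s1)"
  unfolding is_form_def
  apply clarify
  subgoal for c by (rule exI[of _ "\<lambda>i. k * c i"]) (auto simp: bform_def fun_eq_iff sum_distrib_left algebra_simps)
  done

lemma form_sum: "finite A \<Longrightarrow> (\<And>j. j \<in> A \<Longrightarrow> is_form d (f j)) \<Longrightarrow> is_form d (\<lambda>s0 s1. \<Sum>j\<in>A. f j s0 s1)"
proof (induction A rule: finite_induct)
  case empty then show ?case using form_zero by simp
next
  case (insert x F)
  then show ?case using form_add[of d "f x" "\<lambda>s0 s1. \<Sum>j\<in>F. f j s0 s1"] by simp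
qed

lemma form_lin_mult:
  assumes "is_form d f"
  shows "is_form (Suc d) (\<lambda>s0 s1. (\<alpha> * s0 + \<beta> * s1) * f s0 s1)"
proof -
  obtain c where f: "f = bform c d" using assms is_form_def by auto
  define c' where "c' k = (if k = 0 then 0 else \<alpha> * c (k - 1)) + (if k \<le> d then \<beta> * c k else 0)" for k
  have "(\<alpha> * s0 + \<beta> * s1) * bform c d s0 s1 = bform c' (Suc d) s0 s1" for s0 s1
  proof -
    have e1: "(\<Sum>k\<le>Suc d. (if k = 0 then 0 else \<alpha> * c (k - 1)) * s0 ^ k * s1 ^ (Suc d - k))
        = \<alpha> * s0 * bform c d s0 s1"
      unfolding sum.atMost_Suc_shift bform_def sum_distrib_left
      by (auto intro!: sum.cong simp: algebra_simps)
    have e2: "(\<Sum>k\<le>Suc d. (if k \<le> d then \<beta> * c k else 0) * s0 ^ k * s1 ^ (Suc d - k))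
        = \<beta> * s1 * bform c d s0 s1"
      unfolding sum.atMost_Suc bform_def sum_distrib_left
      by (auto intro!: sum.cong simp: algebra_simps Suc_diff_le)
    have "bform c' (Suc d) s0 s1 = (\<Sum>k\<le>Suc d. (if k = 0 then 0 else \<alpha> * c (k - 1)) * s0 ^ k * s1 ^ (Suc d - k))
       + (\<Sum>k\<le>Suc d. (if k \<le> d then \<beta> * c k else 0) * s0 ^ k * s1 ^ (Suc d - k))"
      unfolding bform_def c'_def sum.distrib[symmetric] by (rule sum.cong) (auto simp: algebra_simps)
    then show ?thesis using e1 e2 by (simp add: algebra_simps)
  qed
  then show ?thesis unfolding is_form_def f by (intro exI[of _ c']) (auto simp: fun_eq_iff)
qed

lemma form_prod_mult:
  "finite A \<Longrightarrow> is_form d f \<Longrightarrow>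
    is_form (card A + d) (\<lambda>s0 s1. (\<Prod>k\<in>A. \<alpha> k * s0 + \<beta> k * s1) * f s0 s1)"
proof (induction A rule: finite_induct)
  case empty then show ?case by simp
next
  case (insert x F)
  have "is_form (Suc (card F + d)) (\<lambda>s0 s1. (\<alpha> x * s0 + \<beta> x * s1) * ((\<Prod>k\<in>F. \<alpha> k * s0 + \<beta> k * s1) * f s0 s1))"
    using form_lin_mult insert by blast
  then show ?case using insert by (simp add: mult.assoc)
qed

lemma form_pow: "is_form n (\<lambda>s0 s1. (\<alpha> * s0 + \<beta> * s1) ^ n)"
proof (induction n)
  case 0 then show ?case using form_const[of 1] by simp
next
  case (Suc n) then show ?case using form_lin_mult[OF Suc] by simp
qed

lemma bform_homog: "bform c d (l * a0) (l * a1) = l ^ d * bform c d a0 a1"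
  unfolding bform_def sum_distrib_left
proof (rule sum.cong)
  fix i assume "i \<in> {..d}"
  then have "l ^ i * l ^ (d - i) = l ^ d" by (simp add: power_add[symmetric])
  then show "c i * (l * a0) ^ i * (l * a1) ^ (d - i) = l ^ d * (c i * a0 ^ i * a1 ^ (d - i))"
    by (simp add: power_mult_distrib algebra_simps)
qed simp

lemma bform_nz: "bform c d s0 s1 \<noteq> 0 \<Longrightarrow> \<exists>i\<le>d. c i \<noteq> 0"
  unfolding bform_def by (rule ccontr) auto

lemma bform_deriv0: "((\<lambda>s. bform c d s t1) has_field_derivative bform_d0 c d s t1) (at s)"
  unfolding bform_def bform_d0_def
  by (rule DERIV_sum) (auto intro!: derivative_eq_intros)

lemma bform_deriv1: "((\<lambda>t. bform c d s t) has_field_derivative bform_d1 c d s t) (at t)"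
  unfolding bform_def bform_d1_def
proof (rule DERIV_sum)
  fix i
  have "((\<lambda>t. c i * s ^ i * t ^ (d - i)) has_field_derivative c i * s ^ i * (of_nat (d - i) * t ^ (d - i - Suc 0))) (at t)"
    using DERIV_cmult[OF DERIV_power[OF DERIV_ident, of "d - i" t UNIV], of "c i * s ^ i"] by simp
  then show "((\<lambda>t. c i * s ^ i * t ^ (d - i)) has_field_derivative c i * of_nat (d - i) * s ^ i * t ^ (d - i - 1)) (at t)"
    by (simp add: algebra_simps)
qed


lemma avoid_c: "finite (B :: complex set) \<Longrightarrow> \<exists>c. c \<notin> B"
  by (rule ex_new_if_finite[OF infinite_UNIV_char_0])

lemma avoid_lin:
  assumes "finite V" "\<And>v. v \<in> V \<Longrightarrow> v \<noteq> (0, 0)"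
  shows "\<exists>l::complex. \<forall>v\<in>V. fst v + l * snd v \<noteq> 0"
proof -
  obtain l where l: "l \<notin> (\<lambda>v. - fst v / snd v) ` V" using avoid_c assms(1) by blast
  have "fst v + l * snd v \<noteq> 0" if "v \<in> V" for v
  proof (cases "snd v = 0")
    case True then show ?thesis using assms(2)[OF that] by (cases v) auto
  next
    case False
    show ?thesis
    proof
      assume "fst v + l * snd v = 0"
      then have "l = - fst v / snd v" using False by (simp add: field_simps add_eq_0_iff)
      then show False using l that by auto
    qed
  qed
  then show ?thesis by blast
qed

lemma fibre_scale:
  fixes a0 a1 t0 t1 :: complex
  assumes "(a0, a1) \<noteq> (0, 0)" "(t0, t1) \<noteq> (0, 0)" "a1 * t0 - a0 * t1 = 0"
  shows "\<exists>l. l \<noteq> 0 \<and> t0 = l * a0 \<and> t1 = l * a1"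
proof (cases "a0 = 0")
  case True
  then have "a1 \<noteq> 0" using assms by auto
  then have "t0 = 0" using assms True by auto
  then show ?thesis using assms True \<open>a1 \<noteq> 0\<close>
    by (intro exI[of _ "t1 / a1"]) auto
next
  case False
  have "t1 = t0 / a0 * a1" using assms(3) False by (simp add: field_simps)
  moreover have "t0 \<noteq> 0" using assms(2) \<open>t1 = t0 / a0 * a1\<close> by auto
  ultimately show ?thesis using False by (intro exI[of _ "t0 / a0"]) auto
qed

lemma transverse_suff:
  assumes tau: "\<tau> \<noteq> (0, 0)"
    and nz: "bform (fst \<sigma>) (b - e) (fst \<tau>) (snd \<tau>) \<noteq> 0 \<or> bform (snd \<sigma>) b (fst \<tau>) (snd \<tau>) \<noteq> 0"
  shows "transverse_to_fibre e b \<sigma> \<tau>"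
  unfolding transverse_to_fibre_def
proof (intro allI impI notI)
  fix p assume p: "valid_pt p \<and> sec_eval e b \<sigma> p = 0 \<and> on_fibre \<tau> p"
    and ex: "\<exists>c. sec_grad e b \<sigma> p = (c * snd \<tau>, - c * fst \<tau>, 0, 0)"
  obtain a0 a1 where ta: "\<tau> = (a0, a1)" by (cases \<tau>)
  obtain t0 t1 x0 x1 where pp: "p = (t0, t1, x0, x1)" by (cases p) auto
  have "(t0, t1) \<noteq> (0, 0)" using p pp by (simp add: valid_pt_def)
  moreover have "a1 * t0 - a0 * t1 = 0" using p pp ta by (simp add: on_fibre_def)
  ultimately obtain l where l: "l \<noteq> 0" "t0 = l * a0" "t1 = l * a1"
    using fibre_scale tau ta by blast
  have "bform (fst \<sigma>) (b - e) t0 t1 \<noteq> 0 \<or> bform (snd \<sigma>) b t0 t1 \<noteq> 0"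
    using nz l ta by (auto simp: bform_homog)
  then show False using ex pp by (auto simp: sec_grad_def)
qed


theorem lemma4p1:
  fixes e b r :: nat and P :: "nat \<Rightarrow> pt" and \<Phi> :: "(complex \<times> complex) set"
  assumes va: "very_ample_Fe e 1 b"
    and pts: "\<And>i. i < r \<Longrightarrow> valid_pt (P i)"
    and fib: "\<And>i j. i < r \<Longrightarrow> j < r \<Longrightarrow> i \<noteq> j \<Longrightarrow> \<not> same_fibre (P i) (P j)"
    and h0: "h0_C0_bf e b \<ge> 2 * r"
    and Phi_fin: "finite \<Phi>"
    and Phi_fib: "\<And>\<tau>. \<tau> \<in> \<Phi> \<Longrightarrow> \<tau> \<noteq> (0, 0)"
    and Phi_disj: "\<And>\<tau> i. \<tau> \<in> \<Phi> \<Longrightarrow> i < r \<Longrightarrow> \<not> on_fibre \<tau> (P i)"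
  shows "\<exists>\<sigma>. nonzero_section e b \<sigma>
           \<and> (\<forall>i<r. passes_through e b \<sigma> (P i) \<and> smooth_at e b \<sigma> (P i))
           \<and> (\<forall>\<tau>\<in>\<Phi>. transverse_to_fibre e b \<sigma> \<tau>)"
proof -
  define t0 where "t0 i = fst (P i)" for i
  define t1 where "t1 i = fst (snd (P i))" for i
  define x0 where "x0 i = fst (snd (snd (P i)))" for i
  define x1 where "x1 i = snd (snd (snd (P i)))" for i
  have Pi: "P i = (t0 i, t1 i, x0 i, x1 i)" for i by (simp add: t0_def t1_def x0_def x1_def)
  have tnz: "(t0 i, t1 i) \<noteq> (0, 0)" and xnz: "(x0 i, x1 i) \<noteq> (0, 0)" if "i < r" for i
    using pts[OF that] by (simp_all add: Pi valid_pt_def)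
  have Ldiff: "- t1 i * t0 j + t0 i * t1 j \<noteq> 0" if "i < r" "j < r" "i \<noteq> j" for i j
    using fib[OF that] by (simp add: Pi same_fibre_def)
  have LPhi: "- t1 i * fst \<tau> + t0 i * snd \<tau> \<noteq> 0" if "\<tau> \<in> \<Phi>" "i < r" for \<tau> i
    using Phi_disj[OF that] by (cases \<tau>) (simp add: Pi on_fibre_def algebra_simps)
  have Lself: "- t1 i * t0 i + t0 i * t1 i = 0" for i by simp
  have be: "b > e" using va by (simp add: very_ample_Fe_def)
  have h0': "2 * r \<le> b - e + 1 + (b + 1)" using h0 unfolding h0_C0_bf_def .
  have rb: "r \<le> b + 1" using h0' diff_le_self[of b e] by linarith
  define V where "V = (\<lambda>i. (t0 i, t1 i)) ` {..<r} \<union> \<Phi>"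
  have finV: "finite V" using Phi_fin by (simp add: V_def)
  have Vnz: "\<And>v. v \<in> V \<Longrightarrow> v \<noteq> (0, 0)"
  proof -
    fix v assume "v \<in> V"
    then consider i where "i < r" "v = (t0 i, t1 i)" | "v \<in> \<Phi>" unfolding V_def by auto
    then show "v \<noteq> (0, 0)"
    proof cases
      case 1 then show ?thesis using tnz[OF 1(1)] by simp
    next
      case 2 then show ?thesis using Phi_fib by simp
    qed
  qed
  obtain lam where lam0: "\<forall>v\<in>V. fst v + lam * snd v \<noteq> 0"
  proof -
    have "\<exists>l. \<forall>v\<in>V. fst v + l * snd v \<noteq> 0" by (rule avoid_lin[OF finV]) (rule Vnz)
    then show ?thesis using that by (elim exE)
  qed
  have lam: "fst v + lam * snd v \<noteq> 0" if "v \<in> V" for v using lam0 that by simp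
  have Nt: "t0 i + lam * t1 i \<noteq> 0" if "i < r" for i
  proof -
    have "(t0 i, t1 i) \<in> V" using that unfolding V_def by simp
    from lam[OF this] show ?thesis by simp
  qed
  have NPhi: "fst \<tau> + lam * snd \<tau> \<noteq> 0" if "\<tau> \<in> \<Phi>" for \<tau>
  proof -
    have "\<tau> \<in> V" using that unfolding V_def by simp
    from lam[OF this] show ?thesis .
  qed
  define V' where "V' = insert (1, lam) ((\<lambda>i. (- t1 i, t0 i)) ` {..<r})"
  have finV': "finite V'" by (simp add: V'_def)
  have V'nz: "\<And>v. v \<in> V' \<Longrightarrow> v \<noteq> (0, 0)"
  proof -
    fix v assume "v \<in> V'"
    then consider "v = (1, lam)" | i where "i < r" "v = (- t1 i, t0 i)" unfolding V'_def by auto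
    then show "v \<noteq> (0, 0)"
    proof cases
      case 1 then show ?thesis by simp
    next
      case (2 i) then show ?thesis using tnz[OF 2(1)] by auto
    qed
  qed
  obtain mu where mu0: "\<forall>v\<in>V'. fst v + mu * snd v \<noteq> 0"
  proof -
    have "\<exists>l. \<forall>v\<in>V'. fst v + l * snd v \<noteq> 0" by (rule avoid_lin[OF finV']) (rule V'nz)
    then show ?thesis using that by (elim exE)
  qed
  have mu: "fst v + mu * snd v \<noteq> 0" if "v \<in> V'" for v using mu0 that by simp
  have Lw: "- t1 i * 1 + t0 i * mu \<noteq> 0" if "i < r" for i
  proof -
    have "(- t1 i, t0 i) \<in> V'" using that unfolding V'_def by simp
    from mu[OF this] show ?thesis by (simp add: mult.commute)
  qed
  have Nw: "1 * 1 + lam * mu \<noteq> 0"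
  proof -
    have "(1, lam) \<in> V'" unfolding V'_def by simp
    from mu[OF this] show ?thesis by (simp add: mult.commute)
  qed
  define S where "S = {i. i < r \<and> x1 i = 0}"
  define T where "T = {i. i < r \<and> x1 i \<noteq> 0}"
  have finS: "finite S" and finT: "finite T" by (auto simp: S_def T_def)
  have ST: "S \<union> T = {..<r}" "S \<inter> T = {}" by (auto simp: S_def T_def)
  have cardST: "card S + card T = r" using card_Un_disjoint[OF finS finT ST(2)] ST(1) by simp
  define m where "m = card T"
  define k where "k = card S"
  have sub: "S \<subseteq> {..<r}" "T \<subseteq> {..<r}" using ST by auto
  define PF where "PF A n s0 s1 = (\<Prod>i\<in>A. - t1 i * s0 + t0 i * s1) * (s0 + lam * s1) ^ n" for A n s0 s1
  have PF_form: "is_form (card A + n) (PF A n)" if "finite A" for A n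
  proof -
    have "is_form (card A + n) (\<lambda>s0 s1. (\<Prod>i\<in>A. (\<lambda>i. - t1 i) i * s0 + t0 i * s1) * (1 * s0 + lam * s1) ^ n)"
      by (rule form_prod_mult[OF that form_pow])
    then show ?thesis unfolding PF_def by simp
  qed
  have PF_pt: "PF A n (t0 j) (t1 j) \<noteq> 0" if "A \<subseteq> {..<r}" "j < r" "j \<notin> A" for A n j
  proof -
    have "finite A" using that finite_subset by blast
    moreover have "\<forall>i\<in>A. - t1 i * t0 j + t0 i * t1 j \<noteq> 0" using that Ldiff by blast
    ultimately show ?thesis using Nt[OF that(2)] by (simp add: PF_def)
  qed
  have PF_Phi: "PF A n (fst \<tau>) (snd \<tau>) \<noteq> 0" if "A \<subseteq> {..<r}" "\<tau> \<in> \<Phi>" for A n \<tau>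
  proof -
    have "finite A" using that finite_subset by blast
    moreover have "\<forall>i\<in>A. - t1 i * fst \<tau> + t0 i * snd \<tau> \<noteq> 0" using that LPhi by blast
    ultimately show ?thesis using NPhi[OF that(2)] by (simp add: PF_def)
  qed
  have PF_w: "PF A n 1 mu \<noteq> 0" if "A \<subseteq> {..<r}" for A n
  proof -
    have "finite A" using that finite_subset by blast
    moreover have "\<forall>i\<in>A. - t1 i * 1 + t0 i * mu \<noteq> 0" using that Lw by blast
    ultimately show ?thesis using Nw by (simp add: PF_def)
  qed
  have PF_zero: "PF A n (t0 j) (t1 j) = 0" if "finite A" "j \<in> A" for A n j
  proof -
    have "(\<Prod>i\<in>A. - t1 i * t0 j + t0 i * t1 j) = 0"
      by (rule prod_zero[OF that(1)]) (rule bexI[OF _ that(2)], simp)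
    then show ?thesis by (simp add: PF_def)
  qed
  show ?thesis
  proof (cases "k \<le> b - e")
    case True
    have eqk: "k + (b - e - k) = b - e" using True by simp
    have "is_form (b - e) (PF S (b - e - k))" using PF_form[OF finS, of "b - e - k"]
      by (simp only: k_def[symmetric] eqk)
    then obtain g where g: "PF S (b - e - k) = bform g (b - e)" by (auto simp: is_form_def)
    define G where "G = PF S (b - e - k)"
    define v where "v j = - x0 j * G (t0 j) (t1 j) / x1 j" for j
    define w where "w j = v j / PF (T - {j}) (b + 1 - m) (t0 j) (t1 j)" for j
    define H0 where "H0 s0 s1 = (\<Sum>j\<in>T. w j * PF (T - {j}) (b + 1 - m) s0 s1)" for s0 s1
    have mb: "m \<le> b + 1" using cardST rb m_def by simp
    have H0f: "is_form b H0" unfolding H0_def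
    proof (rule form_sum[OF finT])
      fix j assume j: "j \<in> T"
      have "m \<ge> 1" using j finT m_def by (simp add: Suc_le_eq card_gt_0_iff) blast
      moreover have "card (T - {j}) = m - 1" using j finT m_def by (simp add: card_Diff_singleton)
      ultimately have "card (T - {j}) + (b + 1 - m) = b" using mb by linarith
      then show "is_form b (\<lambda>s0 s1. w j * PF (T - {j}) (b + 1 - m) s0 s1)"
        using form_smult[OF PF_form[of "T - {j}" "b + 1 - m"]] finT by simp
    qed
    have H0v: "H0 (t0 j) (t1 j) = v j" if "j \<in> T" for j
    proof -
      have jr: "j < r" using that T_def by simp
      have "H0 (t0 j) (t1 j) = w j * PF (T - {j}) (b + 1 - m) (t0 j) (t1 j)
          + (\<Sum>i\<in>T - {j}. w i * PF (T - {i}) (b + 1 - m) (t0 j) (t1 j))"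
        unfolding H0_def using sum.remove[OF finT that] by simp
      also have "(\<Sum>i\<in>T - {j}. w i * PF (T - {i}) (b + 1 - m) (t0 j) (t1 j)) = 0"
        by (rule sum.neutral) (use finT that in \<open>auto intro!: PF_zero\<close>)
      also have "PF (T - {j}) (b + 1 - m) (t0 j) (t1 j) \<noteq> 0"
        using PF_pt[of "T - {j}" j] sub jr by auto
      then have "w j * PF (T - {j}) (b + 1 - m) (t0 j) (t1 j) = v j" by (simp add: w_def)
      finally show ?thesis by simp
    qed
    obtain Hf where Hf: "is_form b Hf" "\<And>j. j \<in> T \<Longrightarrow> Hf (t0 j) (t1 j) = v j"
      "\<And>i. i \<in> S \<Longrightarrow> Hf (t0 i) (t1 i) \<noteq> 0"
    proof (cases "S = {}")
      case True then show ?thesis using that H0f H0v by blast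
    next
      case False
      then have "k \<ge> 1" using finS k_def by (simp add: Suc_le_eq card_gt_0_iff)
      then have "m \<le> b" using cardST rb m_def k_def by simp
      define K where "K = PF T (b - m)"
      have eqm: "m + (b - m) = b" using \<open>m \<le> b\<close> by simp
      have Kf: "is_form b K" using PF_form[OF finT, of "b - m"] unfolding K_def
        by (simp only: m_def[symmetric] eqm)
      obtain c where c: "c \<notin> (\<lambda>i. - H0 (t0 i) (t1 i) / K (t0 i) (t1 i)) ` S"
        using avoid_c finS by blast
      show ?thesis
      proof (rule that[of "\<lambda>s0 s1. H0 s0 s1 + c * K s0 s1"])
        show "is_form b (\<lambda>s0 s1. H0 s0 s1 + c * K s0 s1)" by (rule form_add[OF H0f form_smult[OF Kf]])
        show "H0 (t0 j) (t1 j) + c * K (t0 j) (t1 j) = v j" if "j \<in> T" for j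
          using H0v[OF that] PF_zero[OF finT that] K_def by simp
        show "H0 (t0 i) (t1 i) + c * K (t0 i) (t1 i) \<noteq> 0" if "i \<in> S" for i
        proof
          assume a: "H0 (t0 i) (t1 i) + c * K (t0 i) (t1 i) = 0"
          have "K (t0 i) (t1 i) \<noteq> 0" unfolding K_def
            by (rule PF_pt) (use that sub ST in auto)
          then have "c = - H0 (t0 i) (t1 i) / K (t0 i) (t1 i)" using a
            by (simp add: field_simps add_eq_0_iff)
          then show False using c that by auto
        qed
      qed
    qed
    obtain h where h: "Hf = bform h b" using Hf(1) by (auto simp: is_form_def)
    show ?thesis
    proof (intro exI[of _ "(g, h)"] conjI allI impI ballI)
      show "nonzero_section e b (g, h)"
        using bform_nz[of g "b - e" 1 mu] PF_w[of S "b - e - k"] sub g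
        by (auto simp: nonzero_section_def)
      fix i assume ir: "i < r"
      show "passes_through e b (g, h) (P i)"
      proof (cases "i \<in> S")
        case True
        have "G (t0 i) (t1 i) = 0" unfolding G_def by (rule PF_zero[OF finS True])
        then show ?thesis using True g G_def by (simp add: passes_through_def sec_eval_def Pi S_def)
      next
        case False
        then have iT: "i \<in> T" using ir ST by auto
        then have "x1 i \<noteq> 0" by (simp add: T_def)
        then show ?thesis using Hf(2)[OF iT] g h G_def
          by (simp add: passes_through_def sec_eval_def Pi v_def)
      qed
      show "smooth_at e b (g, h) (P i)"
      proof (cases "i \<in> S")
        case True
        then show ?thesis using Hf(3)[OF True] h by (simp add: smooth_at_def sec_grad_def Pi)
      next
        case False
        then have "G (t0 i) (t1 i) \<noteq> 0" unfolding G_def using ir sub by (intro PF_pt) auto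
        then show ?thesis using g G_def by (simp add: smooth_at_def sec_grad_def Pi)
      qed
    next
      fix \<tau> assume tau: "\<tau> \<in> \<Phi>"
      show "transverse_to_fibre e b (g, h) \<tau>"
        using transverse_suff[OF Phi_fib[OF tau], of "(g, h)" b e] PF_Phi[OF sub(1) tau, of "b - e - k"] g
        by simp
    qed
  next
    case False
    then have "k \<ge> 1" by simp
    then have "m \<le> b" using cardST rb m_def k_def by simp
    have eqm: "m + (b - m) = b" using \<open>m \<le> b\<close> by simp
    have "is_form b (PF T (b - m))" using PF_form[OF finT, of "b - m"]
      by (simp only: m_def[symmetric] eqm)
    then obtain h where h: "PF T (b - m) = bform h b" by (auto simp: is_form_def)
    define g :: "nat \<Rightarrow> complex" where "g = (\<lambda>_. 0)"
    have g0: "bform g d s0 s1 = 0" "bform_d0 g d s0 s1 = 0" "bform_d1 g d s0 s1 = 0" for d s0 s1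
      by (simp_all add: g_def bform_def bform_d0_def bform_d1_def)
    obtain i0 where i0: "i0 \<in> S" using \<open>k \<ge> 1\<close> k_def by (metis card.empty ex_in_conv not_one_le_zero)
    have HS: "bform h b (t0 i) (t1 i) \<noteq> 0" if "i \<in> S" for i
      using PF_pt[of T i "b - m"] that sub ST h by (auto simp: S_def T_def)
    show ?thesis
    proof (intro exI[of _ "(g, h)"] conjI allI impI ballI)
      show "nonzero_section e b (g, h)"
        using bform_nz[OF HS[OF i0]] by (auto simp: nonzero_section_def)
      fix i assume ir: "i < r"
      show "passes_through e b (g, h) (P i)"
      proof (cases "i \<in> S")
        case True
        then show ?thesis using g0 by (simp add: passes_through_def sec_eval_def Pi S_def)
      next
        case False
        then have iT: "i \<in> T" using ir ST by auto
        then show ?thesis using g0 PF_zero[OF finT iT, of "b - m"] h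
          by (simp add: passes_through_def sec_eval_def Pi)
      qed
      show "smooth_at e b (g, h) (P i)"
      proof (cases "i \<in> S")
        case True
        then show ?thesis using HS[OF True] by (simp add: smooth_at_def sec_grad_def Pi)
      next
        case False
        then have iT: "i \<in> T" using ir ST by auto
        then have x1i: "x1 i \<noteq> 0" by (simp add: T_def)
        define R where "R = PF (T - {i}) (b - m)"
        obtain cR where cR: "R = bform cR (card (T - {i}) + (b - m))"
          using PF_form[of "T - {i}" "b - m"] finT R_def by (auto simp: is_form_def)
        define dR where "dR = card (T - {i}) + (b - m)"
        have Rnz: "R (t0 i) (t1 i) \<noteq> 0" unfolding R_def using ir sub by (intro PF_pt) auto
        have split: "bform h b s0 s1 = (- t1 i * s0 + t0 i * s1) * R s0 s1" for s0 s1
          using h[symmetric] prod.remove[OF finT iT, of "\<lambda>j. - t1 j * s0 + t0 j * s1"]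
          unfolding PF_def R_def by (simp add: mult.assoc)
        have d0a: "((\<lambda>s. bform h b s (t1 i)) has_field_derivative bform_d0 h b (t0 i) (t1 i)) (at (t0 i))"
          by (rule bform_deriv0)
        have d0b: "((\<lambda>s. (- t1 i * s + t0 i * t1 i) * bform cR dR s (t1 i)) has_field_derivative
            (- t1 i * t0 i + t0 i * t1 i) * bform_d0 cR dR (t0 i) (t1 i) + (- t1 i) * bform cR dR (t0 i) (t1 i)) (at (t0 i))"
          by (rule DERIV_mult'[OF _ bform_deriv0]) (auto intro!: derivative_eq_intros)
        have "(\<lambda>s. bform h b s (t1 i)) = (\<lambda>s. (- t1 i * s + t0 i * t1 i) * bform cR dR s (t1 i))"
          using split cR dR_def by auto
        then have D0: "bform_d0 h b (t0 i) (t1 i) = - t1 i * R (t0 i) (t1 i)"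
          using DERIV_unique[OF d0a] d0b cR dR_def by simp
        have d1a: "((\<lambda>s. bform h b (t0 i) s) has_field_derivative bform_d1 h b (t0 i) (t1 i)) (at (t1 i))"
          by (rule bform_deriv1)
        have d1b: "((\<lambda>s. (- t1 i * t0 i + t0 i * s) * bform cR dR (t0 i) s) has_field_derivative
            (- t1 i * t0 i + t0 i * t1 i) * bform_d1 cR dR (t0 i) (t1 i) + t0 i * bform cR dR (t0 i) (t1 i)) (at (t1 i))"
          by (rule DERIV_mult'[OF _ bform_deriv1]) (auto intro!: derivative_eq_intros)
        have "(\<lambda>s. bform h b (t0 i) s) = (\<lambda>s. (- t1 i * t0 i + t0 i * s) * bform cR dR (t0 i) s)"
          using split cR dR_def by auto
        then have D1: "bform_d1 h b (t0 i) (t1 i) = t0 i * R (t0 i) (t1 i)"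
          using DERIV_unique[OF d1a] d1b cR dR_def by simp
        have "t0 i \<noteq> 0 \<or> t1 i \<noteq> 0" using tnz[OF ir] by auto
        then show ?thesis using D0 D1 x1i Rnz g0 by (auto simp: smooth_at_def sec_grad_def Pi)
      qed
    next
      fix \<tau> assume tau: "\<tau> \<in> \<Phi>"
      show "transverse_to_fibre e b (g, h) \<tau>"
        using transverse_suff[OF Phi_fib[OF tau], of "(g, h)" b e] PF_Phi[OF sub(2) tau, of "b - m"] h
        by simp
    qed
  qed
qed

end
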